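(* If $G$ is a connected graph with girth $g\ge 3$ and minimum degree $\delta\ge 3$, then $F_c(G)\ge \delta+g-3$, and this bound is sharp.
   Context: Forcing process: given a set of initially colored vertices, at each step a colored vertex with exactly one non-colored neighbor forces (colors) that neighbor. A set $S\subseteq V(G)$ is a forcing set if iterating this process from $S$ eventually colors all vertices; it is a connected forcing set if moreover the induced subgraph $G[S]$ is connected. $F_c(G)$ is the minimum cardinality of a connected forcing set of $G$. The girth of $G$ is the length of a shortest cycle in $G$. *)

theory Defs
  imports Main "HOL-Library.Extended_Nat"
begin

definition simple_graph :: "'a set \<Rightarrow> 'a set set \<Rightarrow> bool" where
  "simple_graph V E \<longleftrightarrow> finite V \<and>
     (\<forall>e\<in>E. \<exists>u v. u \<in> V \<and> v \<in> V \<and> u \<noteq> v \<and> e = {u, v})"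

definition neighbors :: "'a set \<Rightarrow> 'a set set \<Rightarrow> 'a \<Rightarrow> 'a set" where
  "neighbors V E v = {u \<in> V. {u, v} \<in> E}"

definition degree :: "'a set \<Rightarrow> 'a set set \<Rightarrow> 'a \<Rightarrow> nat" where
  "degree V E v = card (neighbors V E v)"

definition min_degree :: "'a set \<Rightarrow> 'a set set \<Rightarrow> nat" where
  "min_degree V E = Min (degree V E ` V)"

definition connected_on :: "'a set set \<Rightarrow> 'a set \<Rightarrow> bool" where
  "connected_on E S \<longleftrightarrow> S \<noteq> {} \<and>
     (\<forall>u\<in>S. \<forall>v\<in>S. (\<lambda>x y. x \<in> S \<and> y \<in> S \<and> {x, y} \<in> E)\<^sup>*\<^sup>* u v)"

definition connected_graph :: "'a set \<Rightarrow> 'a set set \<Rightarrow> bool" where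
  "connected_graph V E \<longleftrightarrow> connected_on E V"

definition is_cycle :: "'a set \<Rightarrow> 'a set set \<Rightarrow> 'a list \<Rightarrow> bool" where
  "is_cycle V E cs \<longleftrightarrow> 3 \<le> length cs \<and> distinct cs \<and> set cs \<subseteq> V \<and>
     (\<forall>i < length cs. {cs ! i, cs ! ((i + 1) mod length cs)} \<in> E)"

text \<open>Girth: length of a shortest cycle (infinity if acyclic).\<close>
definition girth :: "'a set \<Rightarrow> 'a set set \<Rightarrow> enat" where
  "girth V E = (INF cs \<in> {cs. is_cycle V E cs}. enat (length cs))"

definition force_step :: "'a set \<Rightarrow> 'a set set \<Rightarrow> 'a set \<Rightarrow> 'a set \<Rightarrow> bool" where
  "force_step V E C C' \<longleftrightarrow> (\<exists>u w. u \<in> C \<and> neighbors V E u - C = {w} \<and> C' = insert w C)"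

definition forcing_set :: "'a set \<Rightarrow> 'a set set \<Rightarrow> 'a set \<Rightarrow> bool" where
  "forcing_set V E S \<longleftrightarrow> S \<subseteq> V \<and> (force_step V E)\<^sup>*\<^sup>* S V"

definition connected_forcing_set :: "'a set \<Rightarrow> 'a set set \<Rightarrow> 'a set \<Rightarrow> bool" where
  "connected_forcing_set V E S \<longleftrightarrow> forcing_set V E S \<and> connected_on E S"

definition F_c :: "'a set \<Rightarrow> 'a set set \<Rightarrow> nat" where
  "F_c V E = (LEAST k. \<exists>S. connected_forcing_set V E S \<and> card S = k)"

end

theory Submission
  imports Defs
begin


definition Rs :: "'a set set \<Rightarrow> 'a set \<Rightarrow> 'a \<Rightarrow> 'a \<Rightarrow> bool" where
  "Rs E X = (\<lambda>x y. x \<in> X \<and> y \<in> X \<and> {x, y} \<in> E)"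

definition gdist :: "'a set set \<Rightarrow> 'a set \<Rightarrow> 'a \<Rightarrow> 'a \<Rightarrow> nat" where
  "gdist E X a b = (LEAST n. (Rs E X ^^ n) a b)"

lemma Rs_sym: "Rs E X a b \<Longrightarrow> Rs E X b a"
  by (auto simp: Rs_def insert_commute)

lemma gdist_walk: "(Rs E X)\<^sup>*\<^sup>* a b \<Longrightarrow> (Rs E X ^^ gdist E X a b) a b"
  unfolding gdist_def by (rule LeastI_ex) (simp add: rtranclp_power)

lemma gdist_le: "(Rs E X ^^ n) a b \<Longrightarrow> gdist E X a b \<le> n"
  unfolding gdist_def by (rule Least_le)

lemma gdist_0: "(Rs E X)\<^sup>*\<^sup>* a b \<Longrightarrow> gdist E X a b = 0 \<Longrightarrow> a = b"
  using gdist_walk[of E X a b] by auto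

lemma gdist_edge: "Rs E X a b \<Longrightarrow> gdist E X a b \<le> 1"
proof -
  assume "Rs E X a b"
  then have "(Rs E X ^^ 1) a b" by (metis relpowp_1)
  then show ?thesis by (rule gdist_le)
qed

lemma gdist_tri: "(Rs E X)\<^sup>*\<^sup>* a b \<Longrightarrow> Rs E X b c \<Longrightarrow> gdist E X a c \<le> gdist E X a b + 1"
  using gdist_walk[of E X a b] gdist_le relpowp_Suc_I by fastforce

lemma gdist_le1: "(Rs E X)\<^sup>*\<^sup>* a b \<Longrightarrow> gdist E X a b \<le> 1 \<Longrightarrow> a = b \<or> Rs E X a b"
proof -
  assume h: "(Rs E X)\<^sup>*\<^sup>* a b" "gdist E X a b \<le> 1"
  then have "gdist E X a b = 0 \<or> gdist E X a b = 1" by auto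
  then show ?thesis using gdist_walk[OF h(1)] by auto
qed

lemma Rs_mem: "(Rs E X)\<^sup>*\<^sup>* a b \<Longrightarrow> a \<in> X \<Longrightarrow> b \<in> X"
  by (induction rule: rtranclp_induct) (auto simp: Rs_def)

lemma gdist_layer:
  assumes "(Rs E X)\<^sup>*\<^sup>* a b" "k \<le> gdist E X a b"
  shows "\<exists>w. (Rs E X)\<^sup>*\<^sup>* a w \<and> gdist E X a w = k"
proof -
  let ?d = "gdist E X a b"
  have "(Rs E X ^^ (k + (?d - k))) a b" using gdist_walk[OF assms(1)] assms(2) by simp
  then obtain w where w1: "(Rs E X ^^ k) a w" and w2: "(Rs E X ^^ (?d - k)) w b"
    unfolding relpowp_add by auto
  have le: "gdist E X a w \<le> k" using gdist_le[OF w1] .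
  have "(Rs E X ^^ (gdist E X a w + (?d - k))) a b"
    using relpowp_trans[OF gdist_walk[OF relpowp_imp_rtranclp[OF w1]] w2] .
  then have "?d \<le> gdist E X a w + (?d - k)" by (rule gdist_le)
  then have "gdist E X a w = k" using le assms(2) by linarith
  then show ?thesis using relpowp_imp_rtranclp[OF w1] by blast
qed

lemma Rs_mono: "X \<subseteq> Y \<Longrightarrow> (Rs E X ^^ n) a b \<Longrightarrow> (Rs E Y ^^ n) a b"
  by (rule relpowp_mono[of "Rs E X"]) (auto simp: Rs_def)

fun walk :: "'a set set \<Rightarrow> 'a set \<Rightarrow> 'a list \<Rightarrow> bool" where
  "walk E X [] = False"
| "walk E X [v] = (v \<in> X)"
| "walk E X (v # w # vs) = (v \<in> X \<and> {v, w} \<in> E \<and> walk E X (w # vs))"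

lemma walk_append: "walk E X (xs @ y # zs) \<longleftrightarrow> walk E X (xs @ [y]) \<and> walk E X (y # zs)"
proof (induction xs)
  case Nil
  then show ?case by (cases zs) auto
next
  case (Cons a xs)
  then show ?case by (cases xs) auto
qed

lemma walk_set: "walk E X ps \<Longrightarrow> set ps \<subseteq> X"
  by (induction E X ps rule: walk.induct) auto

lemma walk_edge: "walk E X ps \<Longrightarrow> Suc i < length ps \<Longrightarrow> {ps ! i, ps ! Suc i} \<in> E"
proof (induction E X ps arbitrary: i rule: walk.induct)
  case (3 E X v w vs)
  then show ?case by (cases i) auto
qed auto

lemma walk_of_relpow: "(Rs E X ^^ n) a b \<Longrightarrow> a \<in> X \<Longrightarrow>
   \<exists>ps. walk E X ps \<and> hd ps = a \<and> last ps = b \<and> length ps = Suc n"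
proof (induction n arbitrary: a)
  case 0
  then show ?case by (intro exI[of _ "[a]"]) auto
next
  case (Suc n)
  then obtain c where c: "Rs E X a c" "(Rs E X ^^ n) c b" using relpowp_Suc_D2[of n "Rs E X" a b] by blast
  then have "c \<in> X" by (simp add: Rs_def)
  then obtain ps where ps: "walk E X ps" "hd ps = c" "last ps = b" "length ps = Suc n"
    using Suc.IH c(2) by blast
  then obtain qs where qs: "ps = c # qs" by (cases ps) auto
  show ?case
    apply (intro exI[of _ "a # ps"])
    using ps c(1) qs by (cases qs) (auto simp: Rs_def)
qed

lemma walk_distinct: "walk E X ps \<Longrightarrow>
   \<exists>qs. walk E X qs \<and> distinct qs \<and> hd qs = hd ps \<and> last qs = last ps \<and> length qs \<le> length ps"
proof (induction "length ps" arbitrary: ps rule: less_induct)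
  case less
  show ?case
  proof (cases "distinct ps")
    case True
    then show ?thesis using less.prems by blast
  next
    case False
    then obtain xs ys zs y where ps: "ps = xs @ [y] @ ys @ [y] @ zs"
      using not_distinct_decomp by blast
    have w1: "walk E X (xs @ [y])" and w2: "walk E X (y # ys @ y # zs)"
      using less.prems ps walk_append[of E X xs y "ys @ y # zs"] by auto
    have "walk E X ((y # ys) @ y # zs)" using w2 by simp
    then have "walk E X (y # zs)" using walk_append[of E X "y # ys" y zs] by blast
    then have w: "walk E X (xs @ y # zs)" using w1 walk_append[of E X xs y zs] by blast
    have "length (xs @ y # zs) < length ps" using ps by simp
    then obtain qs where "walk E X qs \<and> distinct qs \<and> hd qs = hd (xs @ y # zs)
        \<and> last qs = last (xs @ y # zs) \<and> length qs \<le> length (xs @ y # zs)"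
      using less.hyps w by blast
    then show ?thesis using ps by (auto simp: hd_append last_append)
  qed
qed



lemma cycle_of_walk:
  assumes "walk E X qs" "distinct qs" "X \<subseteq> V" "c \<in> V" "c \<notin> X"
    "hd qs \<noteq> last qs" "{hd qs, c} \<in> E" "{last qs, c} \<in> E"
  shows "is_cycle V E (c # qs)"
proof -
  have set: "set qs \<subseteq> X" using walk_set[OF assms(1)] .
  have ne: "qs \<noteq> []" using assms(1) by auto
  have len: "2 \<le> length qs"
  proof (rule ccontr)
    assume "\<not> 2 \<le> length qs"
    then have "length qs < 2" by simp
    then obtain v where "qs = [v]" using ne by (cases qs; cases "tl qs") auto
    then show False using assms(6) by simp
  qed
  have edges: "\<forall>i < length (c # qs). {(c # qs) ! i, (c # qs) ! ((i + 1) mod length (c # qs))} \<in> E"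
  proof (intro allI impI)
    fix i assume i: "i < length (c # qs)"
    show "{(c # qs) ! i, (c # qs) ! ((i + 1) mod length (c # qs))} \<in> E"
    proof (cases "i = 0")
      case True
      then show ?thesis using assms(7) len ne by (simp add: hd_conv_nth insert_commute)
    next
      case False
      then obtain j where j: "i = Suc j" by (cases i) auto
      show ?thesis
      proof (cases "Suc j = length qs")
        case True
        then have "(c # qs) ! i = last qs" using j ne by (simp add: last_conv_nth)
        moreover have "(i + 1) mod length (c # qs) = 0" using True j by simp
        ultimately show ?thesis using assms(8) by simp
      next
        case False
        then have "Suc j < length qs" using i j by simp
        then show ?thesis using walk_edge[OF assms(1)] j by simp
      qed
    qed
  qed
  show ?thesis unfolding is_cycle_def using len assms set edges by auto
qed

lemma girth_le_cycle: "girth V E = enat g \<Longrightarrow> is_cycle V E cs \<Longrightarrow> g \<le> length cs"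
proof -
  assume "girth V E = enat g" "is_cycle V E cs"
  then have "enat g \<le> enat (length cs)" unfolding girth_def by (metis INF_lower mem_Collect_eq)
  then show ?thesis by simp
qed

lemma girth_bound:
  assumes "girth V E = enat g" "X \<subseteq> V" "c \<in> V" "c \<notin> X" "a \<noteq> b"
    "{a, c} \<in> E" "{b, c} \<in> E" "(Rs E X ^^ n) a b"
  shows "g \<le> n + 2"
proof -
  have "n \<noteq> 0" using assms(5,8) by (cases n) auto
  then obtain n' where n': "n = Suc n'" by (cases n) auto
  then have "a \<in> X" using relpowp_Suc_D2[of n' "Rs E X" a b] assms(8) by (auto simp: Rs_def)
  then obtain ps where ps: "walk E X ps" "hd ps = a" "last ps = b" "length ps = Suc n"
    using walk_of_relpow[OF assms(8)] by blast
  then obtain qs where qs: "walk E X qs" "distinct qs" "hd qs = a" "last qs = b" "length qs \<le> Suc n"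
    using walk_distinct[OF ps(1)] by auto
  have "is_cycle V E (c # qs)"
    using cycle_of_walk[OF qs(1,2) assms(2,3,4)] qs assms by auto
  then have "g \<le> length (c # qs)" using girth_le_cycle[OF assms(1)] by blast
  then show ?thesis using qs(5) by simp
qed



lemma layers_card:
  assumes fin: "finite S" and x: "x \<in> S" and con: "\<forall>w\<in>S. (Rs E S)\<^sup>*\<^sup>* x w"
    and z: "z \<in> S" and lo: "lo \<le> hi" and hi: "hi \<le> gdist E S x z"
  shows "hi + 1 - lo \<le> card {w\<in>S. lo \<le> gdist E S x w \<and> gdist E S x w \<le> hi}"
proof -
  let ?D = "{w\<in>S. lo \<le> gdist E S x w \<and> gdist E S x w \<le> hi}"
  have "{lo..hi} \<subseteq> gdist E S x ` ?D"
  proof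
    fix k assume k: "k \<in> {lo..hi}"
    obtain w where w: "(Rs E S)\<^sup>*\<^sup>* x w" "gdist E S x w = k"
      using gdist_layer[OF con[rule_format, OF z], of k] k hi by auto
    have "w \<in> S" using Rs_mem[OF w(1) x] .
    then show "k \<in> gdist E S x ` ?D" using w k by force
  qed
  then have "card {lo..hi} \<le> card (gdist E S x ` ?D)"
    by (intro card_mono) (auto simp: fin)
  also have "\<dots> \<le> card ?D" by (rule card_image_le) (simp add: fin)
  finally show ?thesis by simp
qed

lemma gdist_self: "gdist E S x x = 0"
  using gdist_le[of 0 E S x x] by simp

lemma count1:
  assumes fin: "finite S" and x: "x \<in> S" and con: "\<forall>w\<in>S. (Rs E S)\<^sup>*\<^sup>* x w"
    and A: "A \<subseteq> S" "x \<notin> A" "\<forall>a\<in>A. Rs E S x a"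
    and z: "z \<in> S"
  shows "card A + gdist E S x z \<le> card S"
proof -
  let ?D1 = "{w\<in>S. 0 \<le> gdist E S x w \<and> gdist E S x w \<le> 1}"
  let ?D2 = "{w\<in>S. 2 \<le> gdist E S x w \<and> gdist E S x w \<le> gdist E S x z}"
  have "insert x A \<subseteq> ?D1"
  proof
    fix w assume "w \<in> insert x A"
    then show "w \<in> ?D1"
    proof
      assume "w = x" then show ?thesis using x gdist_self[of E S x] by simp
    next
      assume "w \<in> A"
      then have "w \<in> S" "gdist E S x w \<le> 1" using A gdist_edge[of E S x w] by auto
      then show ?thesis by simp
    qed
  qed
  then have c1: "card A + 1 \<le> card ?D1"
    using card_mono[of ?D1 "insert x A"] fin A finite_subset by fastforce
  have c2: "gdist E S x z + 1 - 2 \<le> card ?D2"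
  proof (cases "2 \<le> gdist E S x z")
    case True
    show ?thesis by (rule layers_card[OF fin x con z True]) simp
  next
    case False then show ?thesis by simp
  qed
  have "card (?D1 \<union> ?D2) = card ?D1 + card ?D2"
    by (rule card_Un_disjoint) (auto simp: fin)
  moreover have "card (?D1 \<union> ?D2) \<le> card S" by (rule card_mono[OF fin]) auto
  ultimately show ?thesis using c1 c2 by linarith
qed

lemma count2:
  assumes fin: "finite S" and x: "x \<in> S" and con: "\<forall>w\<in>S. (Rs E S)\<^sup>*\<^sup>* x w"
    and A: "A \<subseteq> S" "x \<notin> A" "\<forall>a\<in>A. Rs E S x a"
    and f: "f \<in> S" and B: "B \<subseteq> S" "f \<notin> B" "\<forall>a\<in>B. Rs E S a f"
    and j: "3 \<le> gdist E S x f"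
  shows "card A + card B + gdist E S x f - 1 \<le> card S"
proof -
  let ?j = "gdist E S x f"
  let ?D1 = "{w\<in>S. 0 \<le> gdist E S x w \<and> gdist E S x w \<le> 1}"
  let ?D2 = "{w\<in>S. 2 \<le> gdist E S x w \<and> gdist E S x w \<le> ?j - 2}"
  let ?D3 = "{w\<in>S. ?j - 1 \<le> gdist E S x w}"
  have "insert x A \<subseteq> ?D1"
  proof
    fix w assume "w \<in> insert x A"
    then show "w \<in> ?D1"
    proof
      assume "w = x" then show ?thesis using x gdist_self[of E S x] by simp
    next
      assume "w \<in> A"
      then have "w \<in> S" "gdist E S x w \<le> 1" using A gdist_edge[of E S x w] by auto
      then show ?thesis by simp
    qed
  qed
  then have c1: "card A + 1 \<le> card ?D1"
    using card_mono[of ?D1 "insert x A"] fin A finite_subset by fastforce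
  have "insert f B \<subseteq> ?D3"
  proof
    fix w assume "w \<in> insert f B"
    then show "w \<in> ?D3"
    proof
      assume "w = f" then show ?thesis using f by simp
    next
      assume w: "w \<in> B"
      then have "w \<in> S" using B by auto
      then have "?j \<le> gdist E S x w + 1" using gdist_tri[OF con[rule_format] B(3)[rule_format, OF w]] by auto
      then show ?thesis using \<open>w \<in> S\<close> by auto
    qed
  qed
  then have c3: "card B + 1 \<le> card ?D3"
    using card_mono[of ?D3 "insert f B"] fin B finite_subset by fastforce
  have c2: "?j - 2 + 1 - 2 \<le> card ?D2"
  proof (cases "2 \<le> ?j - 2")
    case True
    show ?thesis by (rule layers_card[OF fin x con f True]) simp
  next
    case False then show ?thesis by simp
  qed
  have u12: "card (?D1 \<union> ?D2) = card ?D1 + card ?D2"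
    by (rule card_Un_disjoint) (auto simp: fin)
  have "card (?D1 \<union> ?D2 \<union> ?D3) = card (?D1 \<union> ?D2) + card ?D3"
    by (rule card_Un_disjoint) (use j in \<open>auto simp: fin\<close>)
  then have "card (?D1 \<union> ?D2 \<union> ?D3) = card ?D1 + card ?D2 + card ?D3" using u12 by simp
  moreover have "card (?D1 \<union> ?D2 \<union> ?D3) \<le> card S" by (rule card_mono[OF fin]) auto
  ultimately show ?thesis using c1 c2 c3 j by linarith
qed



lemma two_elems: "finite B \<Longrightarrow> 2 \<le> card B \<Longrightarrow> \<exists>a b. a \<in> B \<and> b \<in> B \<and> a \<noteq> b"
proof -
  assume fin: "finite B" and c: "2 \<le> card B"
  then have "B \<noteq> {}" by auto
  then obtain a where a: "a \<in> B" by blast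
  then have "card (B - {a}) \<ge> 1" using c fin by (simp add: card_Diff_singleton)
  then have "B - {a} \<noteq> {}" by (metis card.empty not_one_le_zero)
  then obtain b where "b \<in> B - {a}" by blast
  then show ?thesis using a by blast
qed

lemma elem_other: "finite B \<Longrightarrow> 2 \<le> card B \<Longrightarrow> \<exists>q\<in>B. q \<noteq> x"
  using two_elems by metis

locale setting =
  fixes V :: "'a set" and E :: "'a set set" and g \<delta> :: nat
  assumes sg: "simple_graph V E" and gir: "girth V E = enat g" and g3: "g \<ge> 3"
    and mind: "\<forall>v\<in>V. \<delta> \<le> degree V E v" and d3: "\<delta> \<ge> 3"
begin

abbreviation "N \<equiv> neighbors V E"

lemma finV: "finite V" using sg by (simp add: simple_graph_def)

lemma N_sub: "N v \<subseteq> V" by (auto simp: neighbors_def)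

lemma finN: "finite (N v)" using finite_subset[OF N_sub finV] .

lemma edge_in: "{u, v} \<in> E \<Longrightarrow> u \<in> V \<and> v \<in> V \<and> u \<noteq> v"
  using sg unfolding simple_graph_def by (metis doubleton_eq_iff)

lemma N_iff: "u \<in> N v \<longleftrightarrow> {u, v} \<in> E"
  using edge_in by (auto simp: neighbors_def)

lemma N_sym: "u \<in> N v \<longleftrightarrow> v \<in> N u"
  by (simp add: N_iff insert_commute)

lemma N_irr: "v \<notin> N v"
  using edge_in[of v v] by (auto simp: N_iff)

lemma deg: "v \<in> V \<Longrightarrow> \<delta> \<le> card (N v)"
  using mind by (auto simp: degree_def)

lemma deg1: "v \<in> V \<Longrightarrow> y \<in> N v \<Longrightarrow> \<delta> - 1 \<le> card (N v - {y})"
proof -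
  assume a: "v \<in> V" "y \<in> N v"
  then have "\<delta> \<le> card (N v)" using deg by blast
  moreover have "card (N v - {y}) = card (N v) - 1" using a(2) by (simp add: finN)
  ultimately show ?thesis by linarith
qed

lemma key:
  assumes SV: "S \<subseteq> V" and con: "connected_on E S"
    and x: "x \<in> S" and y: "y \<in> N x" "y \<notin> C" and SC: "S \<subseteq> C" and CV: "C \<subseteq> V"
    and Nx: "N x - {y} \<subseteq> S" and z: "z \<in> C" "z \<in> N y" "z \<noteq> x"
    and alt: "z \<in> S \<or> (\<exists>f\<in>S. z \<in> N f \<and> N f - {z} \<subseteq> S \<and> N f \<subseteq> C)"
  shows "\<delta> + g - 3 \<le> card S"
proof -
  have finS: "finite S" using finite_subset[OF SV finV] .
  have conS: "\<forall>a\<in>S. \<forall>b\<in>S. (Rs E S)\<^sup>*\<^sup>* a b"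
    using con unfolding connected_on_def Rs_def by blast
  have RsN: "\<And>a b. a \<in> S \<Longrightarrow> b \<in> S \<Longrightarrow> a \<in> N b \<Longrightarrow> Rs E S a b \<and> Rs E S b a"
    by (auto simp: Rs_def N_iff insert_commute)
  define A where "A = N x - {y}"
  have xV: "x \<in> V" using x SV by auto
  have cA: "\<delta> - 1 \<le> card A" unfolding A_def using deg1[OF xV y(1)] .
  have A: "A \<subseteq> S" "x \<notin> A" "\<forall>a\<in>A. Rs E S x a"
    unfolding A_def using Nx N_irr[of x] x by (auto simp: Rs_def N_iff insert_commute)
  have yV: "y \<in> V" using y N_sub by auto
  have yS: "y \<notin> S" using y SC by auto
  have exy: "{x, y} \<in> E" using y(1) N_iff[of y x] by (simp add: insert_commute)
  have ezy: "{z, y} \<in> E" using z(2) N_iff[of z y] by blast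
  show ?thesis
  proof (cases "z \<in> S")
    case True
    have rxz: "(Rs E S)\<^sup>*\<^sup>* x z" using conS x True by blast
    have w: "(Rs E S ^^ gdist E S x z) x z" using gdist_walk[OF rxz] .
    have "g \<le> gdist E S x z + 2"
      by (rule girth_bound[OF gir SV yV yS z(3)[symmetric] exy ezy w])
    moreover have "card A + gdist E S x z \<le> card S"
      using count1[OF finS x _ A True] conS x by blast
    ultimately show ?thesis using cA d3 g3 by linarith
  next
    case False
    then obtain f where f: "f \<in> S" "z \<in> N f" "N f - {z} \<subseteq> S" "N f \<subseteq> C" using alt by blast
    have fx: "f \<noteq> x" using f(4) y by auto
    have fV: "f \<in> V" using f SV by auto
    define j where "j = gdist E S x f"
    have con_x: "\<forall>w\<in>S. (Rs E S)\<^sup>*\<^sup>* x w" using conS x by blast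
    have rxf: "(Rs E S)\<^sup>*\<^sup>* x f" using conS x f(1) by blast
    have wf: "(Rs E S ^^ j) x f" unfolding j_def using gdist_walk[OF rxf] .
    have w2: "(Rs E (insert z S) ^^ j) x f" using Rs_mono[OF _ wf] by blast
    have "Rs E (insert z S) f z" using f(1,2) by (auto simp: Rs_def N_iff insert_commute)
    then have w3: "(Rs E (insert z S) ^^ Suc j) x z" using relpowp_Suc_I[OF w2] by blast
    have zV: "z \<in> V" using z CV by auto
    have "y \<noteq> z" using y z by auto
    then have "g \<le> Suc j + 2"
      using girth_bound[OF gir _ yV _ z(3)[symmetric] exy ezy w3] SV zV yS by auto
    moreover have cj: "card A + j \<le> card S" unfolding j_def
      by (rule count1[OF finS x con_x A f(1)])
    moreover have j0: "j \<noteq> 0" using gdist_0[OF rxf] fx j_def by auto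
    define B where "B = N f - {z}"
    have cB: "\<delta> - 1 \<le> card B" unfolding B_def using deg1[OF fV f(2)] .
    have B: "B \<subseteq> S" "f \<notin> B" "\<forall>a\<in>B. Rs E S a f"
      unfolding B_def using f N_irr[of f] by (auto simp: Rs_def N_iff)
    have finB: "finite B" using finite_subset[OF B(1) finS] .
    show ?thesis
    proof (cases "g \<le> j + 2")
      case True then show ?thesis using cj cA d3 g3 by linarith
    next
      case gj: False
      show ?thesis
      proof (cases "3 \<le> j")
        case True
        have "card A + card B + j - 1 \<le> card S"
          unfolding j_def by (rule count2[OF finS x con_x A f(1) B True[unfolded j_def]])
        then show ?thesis using cA cB d3 gj \<open>g \<le> Suc j + 2\<close> by linarith
      next
        case False
        then have "j = 1 \<or> j = 2" using j0 by auto
        then show ?thesis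
        proof
          assume j1: "j = 1"
          then have Rxf: "Rs E S x f" using gdist_le1[OF rxf] fx j_def by auto
          then have fNx: "f \<in> N x" by (auto simp: Rs_def N_iff insert_commute)
          obtain q where q: "q \<in> B" "q \<noteq> x" using elem_other[OF finB] cB d3 by force
          have qA: "q \<notin> A"
          proof
            assume "q \<in> A"
            then have qN: "q \<in> N x" unfolding A_def by auto
            have qf: "q \<in> N f" using q unfolding B_def by auto
            have "(Rs E (S - {x}) ^^ 1) f q"
              using qf f fx q B by (auto simp: Rs_def N_iff insert_commute)
            moreover have "f \<noteq> q" using qf N_irr by auto
            ultimately have "g \<le> 1 + 2"
              using girth_bound[OF gir _ xV _ _ _ _, of "S - {x}" f q 1] SV fNx qN N_iff by auto
            then show False using gj j1 by simp
          qed
          have "insert q (insert x A) \<subseteq> S" using q B A x by auto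
          then have "card (insert q (insert x A)) \<le> card S" by (rule card_mono[OF finS])
          moreover have "card (insert q (insert x A)) = card A + 2"
            using qA q A finite_subset[OF A(1) finS] by simp
          ultimately show ?thesis using cA j1 \<open>g \<le> Suc j + 2\<close> d3 by linarith
        next
          assume j2: "j = 2"
          have "\<exists>q\<in>B. q \<notin> N x"
          proof (rule ccontr)
            assume "\<not> (\<exists>q\<in>B. q \<notin> N x)"
            then have BN: "B \<subseteq> N x" by auto
            obtain q1 q2 where qq: "q1 \<in> B" "q2 \<in> B" "q1 \<noteq> q2"
              using two_elems[OF finB] cB d3 by force
            have "(Rs E (S - {f}) ^^ Suc 1) q1 q2"
            proof (rule relpowp_Suc_I2[of _ q1 x])
              show "Rs E (S - {f}) q1 x" using qq BN B x fx
                by (auto simp: Rs_def N_iff insert_commute)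
              have "q2 \<in> N x" using qq(2) BN by blast
              then have "{q2, x} \<in> E" using N_iff by blast
              then have "{x, q2} \<in> E" by (simp add: insert_commute)
              then have "Rs E (S - {f}) x q2" using qq B x fx
                by (auto simp: Rs_def)
              then show "(Rs E (S - {f}) ^^ 1) x q2" by (metis relpowp_1)
            qed
            then have w12: "(Rs E (S - {f}) ^^ Suc 1) q1 q2" .
            have e1: "{q1, f} \<in> E" "{q2, f} \<in> E" using qq unfolding B_def by (auto simp: N_iff)
            have "g \<le> Suc 1 + 2"
              by (rule girth_bound[OF gir _ fV _ qq(3) e1 w12]) (use SV in auto)
            then show False using gj j2 by simp
          qed
          then obtain q where q: "q \<in> B" "q \<notin> N x" by blast
          have qx: "q \<noteq> x"
          proof
            assume "q = x"
            then have "Rs E S x f" using q B by auto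
            then show False using gdist_edge[of E S x f] j2 j_def by simp
          qed
          have fA: "f \<notin> insert x A"
          proof
            assume "f \<in> insert x A"
            then have "f \<in> A" using fx by auto
            then show False using A gdist_edge[of E S x f] j2 j_def by fastforce
          qed
          have qf: "q \<noteq> f" using q B by auto
          have "insert q (insert f (insert x A)) \<subseteq> S" using q B A x f by auto
          then have "card (insert q (insert f (insert x A))) \<le> card S" by (rule card_mono[OF finS])
          moreover have "card (insert q (insert f (insert x A))) = card A + 3"
          proof -
            have qA: "q \<notin> A" using q(2) unfolding A_def by auto
            show ?thesis using qx qf fA qA A(2) finite_subset[OF A(1) finS] by auto
          qed
          ultimately show ?thesis using cA j2 \<open>g \<le> Suc j + 2\<close> d3 by linarith
        qed
      qed
    qed
  qed
qed

end


lemma Rs_sym_rt: "(Rs E X)\<^sup>*\<^sup>* a b \<Longrightarrow> (Rs E X)\<^sup>*\<^sup>* b a"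
proof (induction rule: rtranclp_induct)
  case base then show ?case by simp
next
  case (step b c)
  have "Rs E X c b" using Rs_sym[OF step(2)] .
  then show ?case using step(3) by (rule converse_rtranclp_into_rtranclp)
qed

context setting begin

definition inv :: "'a set \<Rightarrow> 'a set \<Rightarrow> bool" where
  "inv S C \<longleftrightarrow> S \<subseteq> C \<and> C \<subseteq> V \<and> (\<forall>v\<in>C-S. \<exists>f\<in>S. N v \<inter> C = {f} \<and> N f \<subseteq> C)
     \<and> (\<forall>v\<in>C-S. \<forall>v'\<in>C-S. N v \<inter> C = N v' \<inter> C \<longrightarrow> v = v')"

lemma inv_step:
  assumes SV: "S \<subseteq> V" and con: "connected_on E S" and I: "inv S C"
    and st: "force_step V E C C'"
  shows "\<delta> + g - 3 \<le> card S \<or> inv S C'"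
proof -
  have SC: "S \<subseteq> C" and CV: "C \<subseteq> V"
    and I3: "\<forall>v\<in>C-S. \<exists>f\<in>S. N v \<inter> C = {f} \<and> N f \<subseteq> C"
    and I4: "\<forall>v\<in>C-S. \<forall>v'\<in>C-S. N v \<inter> C = N v' \<inter> C \<longrightarrow> v = v'"
    using I unfolding inv_def by blast+
  obtain u w where u: "u \<in> C" and Nu: "N u - C = {w}" and C': "C' = insert w C"
    using st unfolding force_step_def by blast
  have wN: "w \<in> N u" and wC: "w \<notin> C" using Nu by auto
  have uV: "u \<in> V" using u CV by auto
  have wV: "w \<in> V" using wN N_sub by auto
  have uS: "u \<in> S"
  proof (rule ccontr)
    assume "u \<notin> S"
    then obtain f where f: "N u \<inter> C = {f}" using I3 u by blast
    have "N u = (N u \<inter> C) \<union> (N u - C)" by blast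
    also have "\<dots> = {f, w}" using f Nu by auto
    finally have "card (N u) \<le> 2" by (simp add: card_insert_le_m1)
    moreover have "\<delta> \<le> card (N u)" using deg uV by blast
    ultimately show False using d3 by linarith
  qed
  have NuS: "N u - {w} \<subseteq> S"
  proof
    fix v assume v: "v \<in> N u - {w}"
    then have vC: "v \<in> C" using Nu by blast
    show "v \<in> S"
    proof (rule ccontr)
      assume "v \<notin> S"
      then obtain f where f: "f \<in> S" "N v \<inter> C = {f}" "N f \<subseteq> C" using I3 vC by blast
      have "u \<in> N v" using v N_sym by blast
      then have "u = f" using f(2) u by blast
      then show False using f(3) wN wC by blast
    qed
  qed
  show ?thesis
  proof (cases "\<exists>z\<in>C. z \<in> N w \<and> z \<noteq> u")
    case True
    then obtain z where z: "z \<in> C" "z \<in> N w" "z \<noteq> u" by blast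
    have alt: "z \<in> S \<or> (\<exists>f\<in>S. z \<in> N f \<and> N f - {z} \<subseteq> S \<and> N f \<subseteq> C)"
    proof (cases "z \<in> S")
      case False
      then obtain f where f: "f \<in> S" "N z \<inter> C = {f}" "N f \<subseteq> C" using I3 z(1) by blast
      have zf: "z \<in> N f" using f(2) N_sym by blast
      have "N f - {z} \<subseteq> S"
      proof
        fix v assume v: "v \<in> N f - {z}"
        then have vC: "v \<in> C" using f(3) by blast
        show "v \<in> S"
        proof (rule ccontr)
          assume vS: "v \<notin> S"
          then obtain f' where f': "N v \<inter> C = {f'}" using I3 vC by blast
          have "f \<in> N v" using v N_sym by blast
          then have "f \<in> N v \<inter> C" using f(1) SC by blast
          then have "f' = f" using f' by simp
          then have "N v \<inter> C = N z \<inter> C" using f' f(2) by simp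
          then have "v = z" using I4 vC vS z(1) False by blast
          then show False using v by blast
        qed
      qed
      then show ?thesis using f zf by blast
    qed simp
    have "\<delta> + g - 3 \<le> card S"
      by (rule key[OF SV con uS wN wC SC CV NuS z alt])
    then show ?thesis by blast
  next
    case False
    have uNw: "u \<in> N w" using wN N_sym by blast
    have NwC: "N w \<inter> C = {u}" using False uNw u by blast
    have same: "\<And>v. v \<in> C - S \<Longrightarrow> N v \<inter> C' = N v \<inter> C"
    proof -
      fix v assume v: "v \<in> C - S"
      have "w \<notin> N v"
      proof
        assume "w \<in> N v"
        then have "v \<in> N w" using N_sym by blast
        then have "v = u" using NwC v by blast
        then show False using v uS by blast
      qed
      then show "N v \<inter> C' = N v \<inter> C" using C' by blast
    qed
    have NwC': "N w \<inter> C' = {u}" using NwC C' N_irr[of w] by blast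
    have NuC': "N u \<subseteq> C'" using Nu C' by blast
    have "inv S C'"
      unfolding inv_def
    proof (intro conjI ballI impI)
      show "S \<subseteq> C'" using SC C' by blast
      show "C' \<subseteq> V" using CV C' wV by blast
    next
      fix v assume v: "v \<in> C' - S"
      show "\<exists>f\<in>S. N v \<inter> C' = {f} \<and> N f \<subseteq> C'"
      proof (cases "v = w")
        case True then show ?thesis using NwC' NuC' uS by blast
      next
        case False
        then have vC: "v \<in> C - S" using v C' by blast
        then obtain f where "f \<in> S" "N v \<inter> C = {f}" "N f \<subseteq> C" using I3 by blast
        then show ?thesis using same[OF vC] C' by blast
      qed
    next
      fix v v' assume v: "v \<in> C' - S" and v': "v' \<in> C' - S" and eq: "N v \<inter> C' = N v' \<inter> C'"
      have nw: "\<And>t. t \<in> C - S \<Longrightarrow> N t \<inter> C' \<noteq> {u}"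
      proof
        fix t assume t: "t \<in> C - S" and e: "N t \<inter> C' = {u}"
        obtain f where f: "N t \<inter> C = {f}" "N f \<subseteq> C" using I3 t by blast
        have "f = u" using f(1) e same[OF t] by blast
        then show False using f(2) wN wC by blast
      qed
      show "v = v'"
      proof (cases "v = w")
        case True
        show ?thesis
        proof (rule ccontr)
          assume "v \<noteq> v'"
          then have "v' \<in> C - S" using v' C' True by blast
          then show False using nw eq True NwC' by metis
        qed
      next
        case False
        then have vC: "v \<in> C - S" using v C' by blast
        show ?thesis
        proof (cases "v' = w")
          case True
          then show ?thesis using nw[OF vC] eq NwC' by metis
        next
          case False
          then have vC': "v' \<in> C - S" using v' C' by blast
          have "N v \<inter> C = N v' \<inter> C" using eq same[OF vC] same[OF vC'] by simp
          then show ?thesis using I4 vC vC' by blast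
        qed
      qed
    qed
    then show ?thesis by blast
  qed
qed

lemma inv_reach:
  assumes SV: "S \<subseteq> V" and con: "connected_on E S" and r: "(force_step V E)\<^sup>*\<^sup>* S C"
  shows "\<delta> + g - 3 \<le> card S \<or> inv S C"
  using r
proof (induction rule: rtranclp_induct)
  case base
  then show ?case using SV unfolding inv_def by blast
next
  case (step C C')
  then show ?case using inv_step[OF SV con] by blast
qed

lemma bound_ne:
  assumes cf: "connected_forcing_set V E S" and ne: "S \<noteq> V"
  shows "\<delta> + g - 3 \<le> card S"
proof -
  have SV: "S \<subseteq> V" and r: "(force_step V E)\<^sup>*\<^sup>* S V" and con: "connected_on E S"
    using cf unfolding connected_forcing_set_def forcing_set_def by blast+
  have "\<delta> + g - 3 \<le> card S \<or> inv S V" by (rule inv_reach[OF SV con r])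
  moreover have "\<not> inv S V"
  proof
    assume "inv S V"
    moreover obtain v where v: "v \<in> V - S" using SV ne by blast
    ultimately obtain f where f: "N v \<inter> V = {f}" unfolding inv_def by blast
    have "N v = {f}" using f N_sub by blast
    then have "card (N v) = 1" by simp
    moreover have "\<delta> \<le> card (N v)" using deg v by blast
    ultimately show False using d3 by linarith
  qed
  ultimately show ?thesis by blast
qed

end


context setting begin

lemma delete_vertex:
  assumes cg: "connected_graph V E"
  shows "\<exists>v\<in>V. connected_forcing_set V E (V - {v})"
proof -
  have conV: "\<forall>a\<in>V. \<forall>b\<in>V. (Rs E V)\<^sup>*\<^sup>* a b"
    using cg unfolding connected_graph_def connected_on_def Rs_def by blast
  have Vne: "V \<noteq> {}" using cg unfolding connected_graph_def connected_on_def by blast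
  then obtain r where r: "r \<in> V" by blast
  define d where "d = (\<lambda>a. gdist E V a r)"
  define v where "v = (SOME v. v \<in> V \<and> d v = Max (d ` V))"
  have "Max (d ` V) \<in> d ` V" using Max_in[of "d ` V"] finV Vne by blast
  then have "\<exists>v. v \<in> V \<and> d v = Max (d ` V)" by (metis imageE)
  then have v: "v \<in> V" "d v = Max (d ` V)" unfolding v_def by (metis (mono_tags, lifting) someI_ex)+
  have dmax: "\<And>a. a \<in> V \<Longrightarrow> d a \<le> d v" using v(2) finV by simp
  have reach: "\<And>a. a \<in> V \<Longrightarrow> d a = k \<Longrightarrow> a \<noteq> v \<Longrightarrow> (Rs E (V - {v}))\<^sup>*\<^sup>* a r" for k
  proof (induction k)
    case 0
    have "a = r" using gdist_0[of E V a r] conV 0 r unfolding d_def by blast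
    then show ?case by simp
  next
    case (Suc k)
    have rar: "(Rs E V)\<^sup>*\<^sup>* a r" using conV Suc.prems(1) r by blast
    have "(Rs E V ^^ Suc k) a r" using gdist_walk[OF rar] Suc.prems(2) unfolding d_def by simp
    then obtain a' where a1: "Rs E V a a'" and a2: "(Rs E V ^^ k) a' r"
      using relpowp_Suc_D2[of k "Rs E V" a r] by blast
    have a'V: "a' \<in> V" using a1 by (simp add: Rs_def)
    have le: "d a' \<le> k" using gdist_le[OF a2] unfolding d_def .
    have ra'r: "(Rs E V)\<^sup>*\<^sup>* a' r" using conV a'V r by blast
    have "(Rs E V ^^ Suc (d a')) a r"
      using relpowp_Suc_I2[OF a1 gdist_walk[OF ra'r]] unfolding d_def .
    then have "d a \<le> Suc (d a')" using gdist_le unfolding d_def by metis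
    then have da': "d a' = k" using le Suc.prems(2) by linarith
    have "a' \<noteq> v"
    proof
      assume "a' = v"
      then have "Suc k \<le> k" using dmax[OF Suc.prems(1)] Suc.prems(2) da' by simp
      then show False by simp
    qed
    then have IH: "(Rs E (V - {v}))\<^sup>*\<^sup>* a' r" using Suc.IH[OF a'V da'] by blast
    have "Rs E (V - {v}) a a'" using a1 \<open>a' \<noteq> v\<close> Suc.prems(3) by (simp add: Rs_def)
    then show ?case using IH by (rule converse_rtranclp_into_rtranclp)
  qed
  have "card (N v) \<ge> 3" using deg[OF v(1)] d3 by linarith
  then have "N v \<noteq> {}" by auto
  then obtain u where uN: "u \<in> N v" by blast
  have uV: "u \<in> V" using uN N_sub by blast
  have uv: "u \<noteq> v" using uN N_irr by blast
  have con': "connected_on E (V - {v})"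
    unfolding connected_on_def
  proof (intro conjI ballI)
    show "V - {v} \<noteq> {}" using uV uv by blast
  next
    fix a b assume a: "a \<in> V - {v}" and b: "b \<in> V - {v}"
    have ar: "(Rs E (V - {v}))\<^sup>*\<^sup>* a r" using reach[of a "d a"] a by blast
    have br: "(Rs E (V - {v}))\<^sup>*\<^sup>* b r" using reach[of b "d b"] b by blast
    have "(Rs E (V - {v}))\<^sup>*\<^sup>* a b" using rtranclp_trans[OF ar Rs_sym_rt[OF br]] .
    then show "(\<lambda>x y. x \<in> V - {v} \<and> y \<in> V - {v} \<and> {x, y} \<in> E)\<^sup>*\<^sup>* a b"
      unfolding Rs_def .
  qed
  have "N u - (V - {v}) = {v}" using uN N_sym N_sub by blast
  moreover have "insert v (V - {v}) = V" using v(1) by blast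
  ultimately have "force_step V E (V - {v}) V"
    unfolding force_step_def using uV uv by blast
  then have "forcing_set V E (V - {v})" unfolding forcing_set_def by blast
  then show ?thesis using con' v(1) unfolding connected_forcing_set_def by blast
qed

lemma bound_all:
  assumes cg: "connected_graph V E" and cf: "connected_forcing_set V E S"
  shows "\<delta> + g - 3 \<le> card S"
proof (cases "S = V")
  case False
  then show ?thesis using bound_ne[OF cf] by blast
next
  case True
  obtain v where v: "v \<in> V" "connected_forcing_set V E (V - {v})" using delete_vertex[OF cg] by blast
  have "V - {v} \<noteq> V" using v(1) by blast
  then have "\<delta> + g - 3 \<le> card (V - {v})" using bound_ne[OF v(2)] by blast
  also have "\<dots> \<le> card V" using finV by (simp add: card_mono)
  finally show ?thesis using True by simp
qed

lemma Fc_bound: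
  assumes cg: "connected_graph V E"
  shows "\<delta> + g - 3 \<le> F_c V E"
proof -
  have "connected_forcing_set V E V"
    using cg unfolding connected_forcing_set_def forcing_set_def connected_graph_def by blast
  then have ex: "\<exists>k S. connected_forcing_set V E S \<and> card S = k" by blast
  have "\<exists>S. connected_forcing_set V E S \<and> card S = F_c V E"
    unfolding F_c_def by (rule LeastI_ex) (use ex in blast)
  then show ?thesis using bound_all[OF cg] by metis
qed

end



lemma mind_of: "simple_graph V E \<Longrightarrow> min_degree V E = \<delta> \<Longrightarrow> \<forall>v\<in>V. \<delta> \<le> degree V E v"
proof
  fix v assume sg: "simple_graph V E" and m: "min_degree V E = \<delta>" and v: "v \<in> V"
  have "finite V" using sg by (simp add: simple_graph_def)
  then have "Min (degree V E ` V) \<le> degree V E v" using v by (intro Min_le) auto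
  then show "\<delta> \<le> degree V E v" using m unfolding min_degree_def by simp
qed

theorem lower_bound:
  fixes V :: "'a set" and E :: "'a set set" and g \<delta> :: nat
  assumes "simple_graph V E" and "connected_graph V E"
    and "girth V E = enat g" and "g \<ge> 3"
    and "min_degree V E = \<delta>" and "\<delta> \<ge> 3"
  shows "F_c V E \<ge> \<delta> + g - 3"
proof -
  interpret setting V E g \<delta>
    using assms mind_of[OF assms(1,5)] by unfold_locales auto
  show ?thesis using Fc_bound[OF assms(2)] .
qed

definition KV :: "nat \<Rightarrow> nat set" where "KV d = {0..d}"
definition KE :: "nat \<Rightarrow> nat set set" where
  "KE d = {{a, b} | a b. a \<in> KV d \<and> b \<in> KV d \<and> a \<noteq> b}"

lemma KE_iff: "{u, v} \<in> KE d \<longleftrightarrow> u \<in> KV d \<and> v \<in> KV d \<and> u \<noteq> v"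
proof
  assume "{u, v} \<in> KE d"
  then obtain a b where "{u, v} = {a, b}" "a \<in> KV d" "b \<in> KV d" "a \<noteq> b" unfolding KE_def by blast
  then show "u \<in> KV d \<and> v \<in> KV d \<and> u \<noteq> v" by (metis doubleton_eq_iff)
next
  assume "u \<in> KV d \<and> v \<in> KV d \<and> u \<noteq> v"
  then show "{u, v} \<in> KE d" unfolding KE_def by blast
qed

lemma K_nb: "v \<in> KV d \<Longrightarrow> neighbors (KV d) (KE d) v = KV d - {v}"
  unfolding neighbors_def by (auto simp: KE_iff)

lemma K_simple: "simple_graph (KV d) (KE d)"
  unfolding simple_graph_def KE_def by (auto simp: KV_def)

lemma K_card: "card (KV d) = Suc d" by (simp add: KV_def)

lemma K_deg: "v \<in> KV d \<Longrightarrow> degree (KV d) (KE d) v = d"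
proof -
  assume v: "v \<in> KV d"
  have "degree (KV d) (KE d) v = card (KV d - {v})" unfolding degree_def using K_nb[OF v] by simp
  also have "\<dots> = d" using v K_card[of d] by (simp add: KV_def)
  finally show ?thesis .
qed

lemma K_mindeg: "min_degree (KV d) (KE d) = d"
proof -
  have "degree (KV d) (KE d) ` KV d = {d}"
  proof
    show "degree (KV d) (KE d) ` KV d \<subseteq> {d}" using K_deg by blast
    have "(0::nat) \<in> KV d" by (simp add: KV_def)
    then show "{d} \<subseteq> degree (KV d) (KE d) ` KV d" using K_deg by (metis empty_subsetI image_eqI insert_subset)
  qed
  then show ?thesis unfolding min_degree_def by simp
qed

lemma K_conn_on: "S \<subseteq> KV d \<Longrightarrow> S \<noteq> {} \<Longrightarrow> connected_on (KE d) S"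
  unfolding connected_on_def
proof (intro conjI ballI)
  fix a b assume S: "S \<subseteq> KV d" and a: "a \<in> S" and b: "b \<in> S"
  show "(\<lambda>x y. x \<in> S \<and> y \<in> S \<and> {x, y} \<in> KE d)\<^sup>*\<^sup>* a b"
  proof (cases "a = b")
    case False
    then have "{a, b} \<in> KE d" using KE_iff S a b by blast
    then show ?thesis using a b by (intro r_into_rtranclp) blast
  qed simp
qed

lemma K_girth: "3 \<le> d \<Longrightarrow> girth (KV d) (KE d) = enat 3"
proof -
  assume d: "3 \<le> d"
  have k: "(0::nat) \<in> KV d" "(1::nat) \<in> KV d" "(2::nat) \<in> KV d" using d by (auto simp: KV_def)
  have e01: "{0::nat, 1} \<in> KE d" using k(1,2) KE_iff[of 0 1 d] by simp
  have e12: "{1::nat, 2} \<in> KE d" using k(2,3) KE_iff[of 1 2 d] by simp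
  have e20: "{2::nat, 0} \<in> KE d" using k(3,1) KE_iff[of 2 0 d] by simp
  have edges: "\<forall>i<length [0::nat, 1, 2]. {[0::nat, 1, 2] ! i, [0::nat, 1, 2] ! ((i + 1) mod length [0::nat, 1, 2])} \<in> KE d"
  proof (intro allI impI)
    fix i assume "i < length [0::nat, 1, 2]"
    then have "i = 0 \<or> i = 1 \<or> i = 2" by auto
    then show "{[0::nat, 1, 2] ! i, [0::nat, 1, 2] ! ((i + 1) mod length [0::nat, 1, 2])} \<in> KE d"
      using e01 e12 e20 by auto
  qed
  have cyc: "is_cycle (KV d) (KE d) [0, 1, 2]"
    unfolding is_cycle_def using edges k by simp
  have "girth (KV d) (KE d) \<le> enat (length [0::nat, 1, 2])"
    unfolding girth_def by (rule INF_lower) (use cyc in simp)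
  then have "girth (KV d) (KE d) \<le> enat 3" by (simp add: numeral_3_eq_3)
  moreover have "enat 3 \<le> girth (KV d) (KE d)"
    unfolding girth_def by (rule INF_greatest) (auto simp: is_cycle_def)
  ultimately show ?thesis by simp
qed

lemma K_Fc_le: "3 \<le> d \<Longrightarrow> F_c (KV d) (KE d) \<le> d"
proof -
  assume d: "3 \<le> d"
  let ?S = "KV d - {0}"
  have c: "card ?S = d" by (simp add: K_card KV_def)
  have S1: "(1::nat) \<in> ?S" using d by (simp add: KV_def)
  have "(1::nat) \<in> KV d" using S1 by blast
  then have N1: "neighbors (KV d) (KE d) 1 = KV d - {1}" by (rule K_nb)
  have z0: "(0::nat) \<in> KV d" by (simp add: KV_def)
  have o1: "(0::nat) \<noteq> 1" by simp
  have nb: "neighbors (KV d) (KE d) 1 - ?S = {0}" unfolding N1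
  proof (rule set_eqI)
    fix x :: nat
    show "x \<in> KV d - {1} - (KV d - {0}) \<longleftrightarrow> x \<in> {0}"
    proof
      assume "x \<in> KV d - {1} - (KV d - {0})"
      then show "x \<in> {0}" by blast
    next
      assume "x \<in> {0}"
      then show "x \<in> KV d - {1} - (KV d - {0})" using z0 by simp
    qed
  qed
  have ins: "KV d = insert 0 ?S" by (auto simp: KV_def)
  have fs: "force_step (KV d) (KE d) ?S (KV d)" unfolding force_step_def
    by (rule exI[of _ 1], rule exI[of _ 0], intro conjI S1 nb ins)
  have "forcing_set (KV d) (KE d) ?S" unfolding forcing_set_def
    using r_into_rtranclp[of "force_step (KV d) (KE d)", OF fs] by auto
  moreover have "connected_on (KE d) ?S" by (rule K_conn_on) (use S1 in auto)
  ultimately have cf: "connected_forcing_set (KV d) (KE d) ?S" unfolding connected_forcing_set_def by simp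
  have "(LEAST k. \<exists>S. connected_forcing_set (KV d) (KE d) S \<and> card S = k) \<le> d"
    by (rule Least_le) (use cf c in blast)
  then show ?thesis unfolding F_c_def .
qed

lemma sharp: "3 \<le> d \<Longrightarrow> \<exists>(V' :: nat set) (E' :: nat set set) g'.
          simple_graph V' E' \<and> connected_graph V' E' \<and> girth V' E' = enat g' \<and> g' \<ge> 3
          \<and> min_degree V' E' = d \<and> F_c V' E' = d + g' - 3"
proof -
  assume d: "3 \<le> d"
  have cg: "connected_graph (KV d) (KE d)" unfolding connected_graph_def
    by (rule K_conn_on) (auto simp: KV_def)
  have "d + 3 - 3 \<le> F_c (KV d) (KE d)"
    by (rule lower_bound[OF K_simple cg K_girth[OF d] _ K_mindeg d]) simp
  then have "F_c (KV d) (KE d) = d + 3 - 3" using K_Fc_le[OF d] by simp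
  then show ?thesis using K_simple cg K_girth[OF d] K_mindeg by blast
qed

theorem theorem6:
  fixes V :: "'a set" and E :: "'a set set" and g \<delta> :: nat
  assumes "simple_graph V E" and "connected_graph V E"
    and "girth V E = enat g" and "g \<ge> 3"
    and "min_degree V E = \<delta>" and "\<delta> \<ge> 3"
  shows "F_c V E \<ge> \<delta> + g - 3
    \<and> (\<forall>d \<ge> 3. \<exists>(V' :: nat set) (E' :: nat set set) g'.
          simple_graph V' E' \<and> connected_graph V' E' \<and> girth V' E' = enat g' \<and> g' \<ge> 3
          \<and> min_degree V' E' = d \<and> F_c V' E' = d + g' - 3)"
  using lower_bound[OF assms] sharp by blast


end
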